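(* For every Lebesgue-measurable set $A\subset[0,1]$ with $\mu(A)>0$, $$E\Big[\int_0^1 \big(X(t) - E[X(t)\mid U\in A]\big)^2\,dt \ \Big|\ U\in A\Big] \ \ge\ \frac{\mu(A)}{6},$$ with equality if $A$ is an interval. Consequently, for every encoder $f$, writing $A_i = \{u\in[0,1]: \text{the realization } t\mapsto t-\mathbf{1}(t\ge u) \text{ is mapped by } f \text{ to } i\}$, one has $D(f)\ge \sum_{i\in\mathbb{N}} \mu(A_i)^2/6$, with equality if every nonempty $A_i$ is an interval.
   Context: $\mu$ denotes Lebesgue measure. Let $U$ be uniformly distributed on $[0,1]$. The sawbridge is the random process $X(t) = t - \mathbf{1}(t\ge U)$, $t\in[0,1]$, viewed as a random element of $L^2[0,1]$. An encoder is a (measurable) map $f:L^2[0,1]\to\mathbb{N}$, with distortion $D(f) = E\big[\int_0^1 (X(t)-E[X(t)\mid f(X)])^2\,dt\big]$. *)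

theory Defs
  imports "HOL-Analysis.Analysis"
begin

text \<open>The realization of the sawbridge for the value u of U:
  t maps to t - 1(t >= u).  Lebesgue measure is the measure space lebesgue.\<close>
definition sawpath :: "real \<Rightarrow> real \<Rightarrow> real" where
  "sawpath u t = t - (if t \<ge> u then 1 else 0)"

text \<open>E[X(t) | U in A] for U uniform on [0,1] (elementary conditioning on an event).\<close>
definition condmean :: "real set \<Rightarrow> real \<Rightarrow> real" where
  "condmean A t = (LINT u:A|lebesgue. sawpath u t) / measure lebesgue A"

definition cond_mse :: "real set \<Rightarrow> real" where
  "cond_mse A = (LINT u:A|lebesgue.
      (LINT t:{0..1}|lebesgue. (sawpath u t - condmean A t)\<^sup>2)) / measure lebesgue A"

definition cell :: "((real \<Rightarrow> real) \<Rightarrow> nat) \<Rightarrow> nat \<Rightarrow> real set" where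
  "cell f i = {u\<in>{0..1}. f (sawpath u) = i}"

text \<open>Distortion D(f) = E[ int_0^1 (X(t) - E[X(t) | f(X)])^2 dt ], where, f(X) being
  discrete, E[X(t) | f(X)] equals E[X(t) | f(X) = i] on the event f(X) = i.\<close>
definition distortion :: "((real \<Rightarrow> real) \<Rightarrow> nat) \<Rightarrow> real" where
  "distortion f = (LINT u:{0..1}|lebesgue.
      (LINT t:{0..1}|lebesgue. (sawpath u t - condmean (cell f (f (sawpath u))) t)\<^sup>2))"

end

theory Submission
  imports Defs
begin


lemma bint:
  fixes g :: "real \<Rightarrow> real"
  assumes S: "S \<in> sets borel" "S \<subseteq> {0..1}" and g: "g \<in> borel_measurable borel"
    and b: "\<And>x. x \<in> S \<Longrightarrow> \<bar>g x\<bar> \<le> C"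
  shows "set_integrable lborel S g"
  unfolding set_integrable_def
proof (rule integrableI_bounded_set[where A=S and B=C])
  show "S \<in> sets lborel" using S by simp
  show "(\<lambda>x. indicat_real S x *\<^sub>R g x) \<in> borel_measurable lborel" using S g by measurable
  have "emeasure lborel S \<le> emeasure lborel {0..1::real}" using S by (intro emeasure_mono) auto
  then show "emeasure lborel S < \<infinity>" by (simp add: le_less_trans)
  show "AE x in lborel. x \<in> S \<longrightarrow> norm (indicat_real S x *\<^sub>R g x) \<le> C" using b by auto
  show "AE x in lborel. x \<notin> S \<longrightarrow> indicat_real S x *\<^sub>R g x = 0" by auto
qed

lemma swap:
  fixes \<phi> :: "real \<Rightarrow> real \<Rightarrow> real"
  assumes A: "A \<in> sets borel" "A \<subseteq> {0..1}" and B: "B \<in> sets borel" "B \<subseteq> {0..1}"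
    and m: "(\<lambda>p. \<phi> (fst p) (snd p)) \<in> borel_measurable (lborel \<Otimes>\<^sub>M lborel)"
    and b: "\<And>u t. \<bar>\<phi> u t\<bar> \<le> C"
  shows "(LINT t:A|lborel. (LINT u:B|lborel. \<phi> u t)) = (LINT u:B|lborel. (LINT t:A|lborel. \<phi> u t))"
proof -

  have C0: "0 \<le> C" using b[of 0 0] by linarith
  define f where "f u t = indicator B u * indicator A t * \<phi> u t" for u t :: real
  have int: "integrable (lborel \<Otimes>\<^sub>M lborel) (case_prod f)"
  proof (rule integrableI_bounded_set[where A="{0..1}\<times>{0..1}" and B=C])
    show "{0..1::real}\<times>{0..1::real} \<in> sets (lborel \<Otimes>\<^sub>M lborel)" by simp
    have "(\<lambda>p. indicator B (fst p) * indicator A (snd p) * \<phi> (fst p) (snd p)) \<in> borel_measurable (lborel \<Otimes>\<^sub>M lborel)"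
      using A B m by measurable
    then show "case_prod f \<in> borel_measurable (lborel \<Otimes>\<^sub>M lborel)" 
      by (simp add: f_def case_prod_beta')
    show "emeasure (lborel \<Otimes>\<^sub>M lborel) ({0..1::real}\<times>{0..1::real}) < \<infinity>"
      by (subst lborel.emeasure_pair_measure_Times) (auto simp: ennreal_mult_less_top)
    show "AE x in lborel \<Otimes>\<^sub>M lborel. x \<in> {0..1}\<times>{0..1} \<longrightarrow> norm (case_prod f x) \<le> C"
      using b C0 by (intro AE_I2) (auto simp: f_def indicator_def abs_mult intro: order_trans)
    show "AE x in lborel \<Otimes>\<^sub>M lborel. x \<notin> {0..1}\<times>{0..1} \<longrightarrow> case_prod f x = 0"
      using A B by (intro AE_I2) (auto simp: f_def indicator_def)
  qed
  have "(LINT t:A|lborel. (LINT u:B|lborel. \<phi> u t)) = (\<integral>t. (\<integral>u. f u t \<partial>lborel) \<partial>lborel)"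
    unfolding set_lebesgue_integral_def f_def
    by (intro Bochner_Integration.integral_cong refl) (simp flip: integral_mult_right_zero add: ac_simps)
  also have "\<dots> = (\<integral>u. (\<integral>t. f u t \<partial>lborel) \<partial>lborel)" by (rule lborel_pair.Fubini_integral[OF int])
  also have "\<dots> = (LINT u:B|lborel. (LINT t:A|lborel. \<phi> u t))"
    unfolding set_lebesgue_integral_def f_def
    by (intro Bochner_Integration.integral_cong refl) (simp flip: integral_mult_right_zero add: ac_simps)
  finally show ?thesis .
qed

lemma fm01: "{0..1::real} \<in> fmeasurable lborel"
  by (simp add: fmeasurable_def)

lemma fmeas01: "S \<in> sets borel \<Longrightarrow> S \<subseteq> {0..1::real} \<Longrightarrow> S \<in> fmeasurable lborel"
  by (rule fmeasurableI2[OF fm01]) auto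

lemma set_int_ind:
  assumes "B \<in> sets borel" "S \<in> sets borel" "B \<subseteq> {0..1::real}"
  shows "(LINT u:B|lborel. indicator S u) = measure lborel (B \<inter> S)"
proof -
  have "(LINT u:B|lborel. indicator S u) = integral\<^sup>L lborel (indicator (B \<inter> S) :: real \<Rightarrow> real)"
    unfolding set_lebesgue_integral_def by (intro Bochner_Integration.integral_cong) (auto simp: indicator_def)
  also have "\<dots> = measure lborel (B \<inter> S)"
    by simp
  finally show ?thesis .
qed

lemma set_int_const:
  assumes "B \<in> sets borel" "B \<subseteq> {0..1::real}"
  shows "(LINT u:B|lborel. (c::real)) = measure lborel B * c"
  using set_integral_const[of B lborel c] fmeas01[OF assms] assms by (auto simp: fmeasurable_def)

definition G :: "real set \<Rightarrow> real \<Rightarrow> real" where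
  "G A t = measure lborel (A \<inter> {..t})"

lemma G_mono: assumes "A \<in> sets borel" "A \<subseteq> {0..1}" shows "mono (G A)"
  unfolding mono_def G_def
  using assms by (auto intro!: measure_mono_fmeasurable fmeas01)

lemma G_meas[measurable]: assumes "A \<in> sets borel" "A \<subseteq> {0..1}" shows "G A \<in> borel_measurable borel"
  using G_mono[OF assms] by (rule borel_measurable_mono)

lemma G_nonneg: "0 \<le> G A t" by (simp add: G_def)

lemma G_le: assumes "A \<in> sets borel" "A \<subseteq> {0..1}" shows "G A t \<le> measure lborel A"
  unfolding G_def using assms by (auto intro!: measure_mono_fmeasurable fmeas01)

lemma mu_le1: assumes "A \<in> sets borel" "A \<subseteq> {0..1::real}" shows "measure lborel A \<le> 1"
  using measure_mono_fmeasurable[of A "{0..1::real}" lborel] assms fm01 by auto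

lemma G_lt: assumes "A \<in> sets borel" "A \<subseteq> {0..1}"
  shows "measure lborel (A \<inter> {..<t}) = G A t"
proof -
  have "A \<inter> {..t} = (A \<inter> {..<t}) \<union> (A \<inter> {t})" by auto
  moreover have "measure lborel (A \<inter> {t}) = 0"
  proof -
    have "{t} \<in> fmeasurable lborel" by (simp add: fmeasurable_def)
    then have "measure lborel (A \<inter> {t}) \<le> measure lborel {t}"
      using assms by (intro measure_mono_fmeasurable) auto
    then show ?thesis by (simp add: order_antisym)
  qed
  moreover have "measure lborel ((A \<inter> {..<t}) \<union> (A \<inter> {t})) \<le> measure lborel (A \<inter> {..<t}) + measure lborel (A \<inter> {t})"
    using assms by (intro measure_Un_le) auto
  moreover have "measure lborel (A \<inter> {..<t}) \<le> measure lborel (A \<inter> {..t})"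
    using assms by (auto intro!: measure_mono_fmeasurable fmeas01)
  ultimately show ?thesis unfolding G_def by (metis add_0_right order_antisym)
qed

lemma G_ge: assumes "A \<in> sets borel" "A \<subseteq> {0..1}"
  shows "measure lborel (A \<inter> {t..}) = measure lborel A - G A t"
proof -
  have "A \<inter> {t..} = A - (A \<inter> {..<t})" by auto
  then have "measure lborel (A \<inter> {t..}) = measure lborel A - measure lborel (A \<inter> {..<t})"
    using assms fmeas01[OF assms] by (simp only:) (rule measure_Diff, auto simp: fmeasurable_def)
  then show ?thesis using G_lt[OF assms] by simp
qed

lemma ind_le: "(if u \<le> t then 1 else 0::real) = indicator {..t} u"
  "(if u \<le> t then 1 else 0::real) = indicator {u..} t"
  by (auto simp: indicator_def)

lemma int_G:
  assumes A: "A \<in> sets borel" "A \<subseteq> {0..1}"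
  shows "(LINT u:A|lborel. (if u \<le> t then 1 else 0::real)) = G A t"
    "(LINT t:A|lborel. (if u \<le> t then 1 else 0::real)) = measure lborel A - G A u"
  using set_int_ind[OF A(1) _ A(2), of "{..t}"] set_int_ind[OF A(1) _ A(2), of "{u..}"] G_ge[OF A]
  by (simp_all only: ind_le(1)[of _ t] ind_le(2)[of u] G_def, auto)

lemma meas_le: "(\<lambda>p::real\<times>real. if fst p \<le> snd p then 1 else 0::real) \<in> borel_measurable (lborel \<Otimes>\<^sub>M lborel)"
  by measurable

lemma S1:
  assumes A: "A \<in> sets borel" "A \<subseteq> {0..1}"
  shows "(LINT t:A|lborel. G A t) = (measure lborel A)^2 / 2"
proof -
  let ?\<mu> = "measure lborel A"
  have [measurable]: "G A \<in> borel_measurable borel" using G_meas[OF A] .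
  have iG: "set_integrable lborel A (G A)"
    by (rule bint[OF A, where C=1]) (use G_le[OF A] mu_le1[OF A] G_nonneg in \<open>auto intro: order_trans\<close>)
  have ic: "set_integrable lborel A (\<lambda>_. ?\<mu>)"
    by (rule bint[OF A, where C=1]) (use mu_le1[OF A] in auto)
  have "(LINT t:A|lborel. G A t) = (LINT t:A|lborel. (LINT u:A|lborel. (if u \<le> t then 1 else 0::real)))"
    by (simp add: int_G[OF A])
  also have "\<dots> = (LINT u:A|lborel. (LINT t:A|lborel. (if u \<le> t then 1 else 0::real)))"
    by (rule swap[OF A A, where C=1]) (use meas_le in auto)
  also have "\<dots> = (LINT u:A|lborel. ?\<mu> - G A u)"
    by (simp add: int_G[OF A])
  also have "\<dots> = (LINT u:A|lborel. ?\<mu>) - (LINT u:A|lborel. G A u)"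
    by (rule set_integral_diff(2)[OF ic iG])
  also have "(LINT u:A|lborel. ?\<mu>) = ?\<mu> * ?\<mu>" by (rule set_int_const[OF A])
  finally show ?thesis by (simp add: power2_eq_square)
qed

lemma G_bnd: assumes A: "A \<in> sets borel" "A \<subseteq> {0..1}" shows "0 \<le> G A t" "G A t \<le> 1"
  using G_le[OF A] mu_le1[OF A] G_nonneg by (auto intro: order_trans)

lemma S2:
  assumes A: "A \<in> sets borel" "A \<subseteq> {0..1}"
  shows "(LINT t:A|lborel. (G A t)^2) = (measure lborel A)^3 / 3"
proof -
  let ?\<mu> = "measure lborel A"
  have [measurable]: "G A \<in> borel_measurable borel" using G_meas[OF A] .
  note Gb = G_bnd[OF A]
  have iG: "set_integrable lborel A (G A)"
    by (rule bint[OF A, where C=1]) (use Gb in \<open>auto simp: abs_le_iff\<close>)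
  have iG2: "set_integrable lborel A (\<lambda>t. (G A t)^2)"
    by (rule bint[OF A, where C=1]) (use Gb in \<open>auto simp: abs_le_iff power_le_one\<close>)
  have ic: "set_integrable lborel A (\<lambda>_. c)" for c :: real
    by (rule bint[OF A, where C="\<bar>c\<bar>"]) auto
  have inner: "(LINT t:A|lborel. (if u \<le> t then 1 else 0) * G A t) = ?\<mu>^2/2 - (G A u)^2/2" for u
  proof -
    let ?B = "A \<inter> {..<u}"
    have B: "?B \<in> sets borel" "?B \<subseteq> {0..1}" using A by auto
    have iH: "set_integrable lborel A (\<lambda>t. (if t < u then 1 else 0) * G A t)"
      by (rule bint[OF A, where C=1]) (use Gb in \<open>auto simp: abs_le_iff\<close>)
    have "(LINT t:A|lborel. (if u \<le> t then 1 else 0) * G A t)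
        = (LINT t:A|lborel. G A t - (if t < u then 1 else 0) * G A t)"
      using A by (intro set_lebesgue_integral_cong) auto
    also have "\<dots> = (LINT t:A|lborel. G A t) - (LINT t:A|lborel. (if t < u then 1 else 0) * G A t)"
      by (rule set_integral_diff(2)[OF iG iH])
    also have "(LINT t:A|lborel. (if t < u then 1 else 0) * G A t) = (LINT t:?B|lborel. G ?B t)"
    proof -
      have "\<And>t. t < u \<Longrightarrow> G A t = G ?B t" unfolding G_def
        by (intro arg_cong[where f="measure lborel"]) auto
      then show ?thesis unfolding set_lebesgue_integral_def
        by (intro Bochner_Integration.integral_cong) (auto simp: indicator_def)
    qed
    also have "\<dots> = (G A u)^2 / 2" using S1[OF B] G_lt[OF A] by simp
    finally show ?thesis using S1[OF A] by simp
  qed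
  have "(LINT t:A|lborel. (G A t)^2) = (LINT t:A|lborel. (LINT u:A|lborel. (if u \<le> t then 1 else 0) * G A t))"
    by (simp add: int_G[OF A] power2_eq_square)
  also have "\<dots> = (LINT u:A|lborel. (LINT t:A|lborel. (if u \<le> t then 1 else 0) * G A t))"
  proof (rule swap[OF A A, where C=1])
    show "(\<lambda>p. (if fst p \<le> snd p then 1 else 0) * G A (snd p)) \<in> borel_measurable (lborel \<Otimes>\<^sub>M lborel)"
      by measurable
    show "\<bar>(if u \<le> t then 1 else 0) * G A t\<bar> \<le> 1" for u t using Gb by (auto simp: abs_le_iff)
  qed
  also have "\<dots> = (LINT u:A|lborel. ?\<mu>^2/2 - (G A u)^2/2)" by (simp add: inner)
  also have "\<dots> = (LINT u:A|lborel. ?\<mu>^2/2) - (LINT u:A|lborel. (G A u)^2/2)"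
    by (rule set_integral_diff(2)[OF ic]) (use iG2 in \<open>simp add: set_integrable_def\<close>)
  also have "(LINT u:A|lborel. ?\<mu>^2/2) = ?\<mu> * (?\<mu>^2/2)" by (rule set_int_const[OF A])
  finally have "(LINT t:A|lborel. (G A t)^2) = ?\<mu> * (?\<mu>^2/2) - (LINT t:A|lborel. (G A t)^2)/2" by simp
  then show ?thesis by (simp add: power3_eq_cube power2_eq_square field_simps)
qed

definition Fd :: "real set \<Rightarrow> real \<Rightarrow> real" where
  "Fd A t = G A t / measure lborel A"

definition V :: "real set \<Rightarrow> real" where
  "V A = (LINT t:{0..1}|lborel. Fd A t * (1 - Fd A t))"

lemma Fd_bnd: assumes A: "A \<in> sets borel" "A \<subseteq> {0..1}" shows "0 \<le> Fd A t" "Fd A t \<le> 1"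
  using G_le[OF A] G_nonneg[of A t] unfolding Fd_def
  by (auto simp: divide_le_eq_1 less_le)

lemma Fd_meas[measurable]: assumes A: "A \<in> sets borel" "A \<subseteq> {0..1}" shows "Fd A \<in> borel_measurable borel"
  unfolding Fd_def using G_meas[OF A] by measurable

lemma V_ineq:
  assumes A: "A \<in> sets borel" "A \<subseteq> {0..1}" and pos: "measure lborel A > 0"
  shows "V A \<ge> measure lborel A / 6" "is_interval A \<Longrightarrow> V A = measure lborel A / 6"
proof -
  let ?\<mu> = "measure lborel A"
  let ?h = "\<lambda>t. Fd A t * (1 - Fd A t)"
  have [measurable]: "Fd A \<in> borel_measurable borel" using Fd_meas[OF A] .
  have [measurable]: "G A \<in> borel_measurable borel" using G_meas[OF A] .
  note Fb = Fd_bnd[OF A]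
  have hb: "\<bar>?h t\<bar> \<le> 1" for t using Fb[of t] by (simp add: abs_le_iff mult_le_one)
  have hn: "0 \<le> ?h t" for t using Fb[of t] by simp
  have D: "{0..1} - A \<in> sets borel" "{0..1} - A \<subseteq> {0..1::real}" using A by auto
  have iA: "set_integrable lborel A ?h" by (rule bint[OF A, where C=1]) (use hb in auto)
  have iD: "set_integrable lborel ({0..1} - A) ?h" by (rule bint[OF D, where C=1]) (use hb in auto)
  have split: "V A = (LINT t:A|lborel. ?h t) + (LINT t:({0..1} - A)|lborel. ?h t)"
  proof -
    have e: "A \<union> ({0..1} - A) = {0..1}" using A(2) by blast
    have "A \<inter> ({0..1} - A) = {}" by blast
    from set_integral_Un[OF this iA iD] show ?thesis unfolding V_def e .
  qed
  have onA: "(LINT t:A|lborel. ?h t) = ?\<mu> / 6"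
  proof -
    have iG: "set_integrable lborel A (\<lambda>t. ?\<mu> * G A t)"
      by (rule bint[OF A, where C=1]) (use G_bnd[OF A] mu_le1[OF A] in \<open>auto simp: abs_le_iff mult_le_one\<close>)
    have iG2: "set_integrable lborel A (\<lambda>t. (G A t)^2)"
      by (rule bint[OF A, where C=1]) (use G_bnd[OF A] in \<open>auto simp: abs_le_iff power_le_one\<close>)
    have "(LINT t:A|lborel. ?h t) = (LINT t:A|lborel. (?\<mu> * G A t - (G A t)^2) / ?\<mu>^2)"
      using pos A by (intro set_lebesgue_integral_cong) (auto simp: Fd_def field_simps power2_eq_square)
    also have "\<dots> = ((LINT t:A|lborel. ?\<mu> * G A t) - (LINT t:A|lborel. (G A t)^2)) / ?\<mu>^2"
      using set_integral_diff(2)[OF iG iG2] by simp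
    also have "\<dots> = (?\<mu> * (?\<mu>^2/2) - ?\<mu>^3/3) / ?\<mu>^2"
      by (simp only: set_integral_mult_right S1[OF A] S2[OF A])
    also have "\<dots> = ?\<mu> / 6" using pos
      by (simp add: field_simps power2_eq_square power3_eq_cube)
    finally show ?thesis .
  qed
  have "(LINT t:({0..1} - A)|lborel. ?h t) \<ge> 0"
    unfolding set_lebesgue_integral_def using hn
    by (intro Bochner_Integration.integral_nonneg) (auto simp: indicator_def)
  then show "V A \<ge> ?\<mu> / 6" using split onA by simp
  assume iv: "is_interval A"
  have z: "?h t = 0" if t: "t \<in> {0..1} - A" for t
  proof (cases "\<exists>a\<in>A. a \<le> t")
    case True
    then obtain a where a: "a \<in> A" "a \<le> t" by blast
    have "A \<inter> {..t} = A"
    proof (safe)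
      fix b assume b: "b \<in> A"
      show "b \<le> t"
      proof (rule ccontr)
        assume "\<not> b \<le> t"
        then have "a \<le> t \<and> t \<le> b" using a by simp
        then have "t \<in> A" using iv a b unfolding is_interval_1 by blast
        then show False using t by simp
      qed
    qed
    then have "Fd A t = 1" using pos unfolding Fd_def G_def by simp
    then show ?thesis by simp
  next
    case False
    then have "A \<inter> {..t} = {}" by auto
    then have "Fd A t = 0" unfolding Fd_def G_def by simp
    then show ?thesis by simp
  qed
  have "(LINT t:({0..1} - A)|lborel. ?h t) = 0"
    unfolding set_lebesgue_integral_def using z
    by (subst Bochner_Integration.integral_cong[where g="\<lambda>_. 0"]) (auto simp: indicator_def)
  then show "V A = ?\<mu> / 6" using split onA by simp
qed

lemma leb_lborel:
  fixes f :: "real \<Rightarrow> real"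
  assumes "f \<in> borel_measurable borel" "S \<in> sets borel"
  shows "(LINT x:S|lebesgue. f x) = (LINT x:S|lborel. f x)"
  unfolding set_lebesgue_integral_def by (rule integral_completion) (use assms in measurable)

lemma saw_ind: "sawpath u t = t - (if u \<le> t then 1 else 0)"
  by (simp add: sawpath_def)

lemma condmean_eq:
  assumes A: "A \<in> sets borel" "A \<subseteq> {0..1}" and pos: "measure lborel A > 0"
  shows "condmean A t = t - Fd A t"
proof -
  let ?\<mu> = "measure lborel A"
  have ml: "measure lebesgue A = ?\<mu>" using A by simp
  have "(LINT u:A|lebesgue. sawpath u t) = (LINT u:A|lborel. sawpath u t)"
    by (rule leb_lborel) (use A in \<open>auto simp: sawpath_def\<close>)
  also have "\<dots> = (LINT u:A|lborel. t - (if u \<le> t then 1 else 0))" by (simp add: saw_ind)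
  also have "\<dots> = (LINT u:A|lborel. t) - (LINT u:A|lborel. (if u \<le> t then 1 else 0))"
    by (rule set_integral_diff(2); rule bint[OF A, where C="\<bar>t\<bar> + 1"]) auto
  also have "\<dots> = ?\<mu> * t - G A t" by (simp add: set_int_const[OF A] int_G[OF A])
  finally show ?thesis unfolding condmean_def ml Fd_def using pos by (simp add: field_simps)
qed

lemma W_meas:
  assumes A: "A \<in> sets borel" "A \<subseteq> {0..1}"
  shows "(\<lambda>u. LINT t:{0..1}|lborel. (Fd A t - (if u \<le> t then 1 else 0))^2) \<in> borel_measurable borel"
proof -
  have [measurable]: "Fd A \<in> borel_measurable borel" using Fd_meas[OF A] .
  have "(\<lambda>u. LINT t:{0..1}|lborel. (Fd A t - (if u \<le> t then 1 else 0))^2) \<in> borel_measurable lborel"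
    unfolding set_lebesgue_integral_def by measurable
  then show ?thesis by simp
qed

lemma main_int:
  assumes A: "A \<in> sets borel" "A \<subseteq> {0..1}" and pos: "measure lborel A > 0"
  shows "(LINT u:A|lebesgue. (LINT t:{0..1}|lebesgue. (sawpath u t - condmean A t)^2))
       = measure lborel A * V A"
proof -
  let ?\<mu> = "measure lborel A"
  let ?\<phi> = "\<lambda>u t. (if u \<le> t then 1 else 0::real)"
  have [measurable]: "Fd A \<in> borel_measurable borel" using Fd_meas[OF A] .
  note Fb = Fd_bnd[OF A]
  have I01: "{0..1::real} \<in> sets borel" "{0..1::real} \<subseteq> {0..1}" by auto
  have inner: "(LINT t:{0..1}|lebesgue. (sawpath u t - condmean A t)^2)
      = (LINT t:{0..1}|lborel. (Fd A t - ?\<phi> u t)^2)" for u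
  proof -
    have "(LINT t:{0..1}|lebesgue. (sawpath u t - condmean A t)^2)
       = (LINT t:{0..1}|lebesgue. (Fd A t - ?\<phi> u t)^2)"
      by (simp add: condmean_eq[OF A pos] saw_ind)
    also have "\<dots> = (LINT t:{0..1}|lborel. (Fd A t - ?\<phi> u t)^2)"
      by (rule leb_lborel) auto
    finally show ?thesis .
  qed
  have eqt: "(LINT u:A|lborel. (Fd A t - ?\<phi> u t)^2) = ?\<mu> * (Fd A t * (1 - Fd A t))" for t
  proof -
    have "(LINT u:A|lborel. (Fd A t - ?\<phi> u t)^2) = (LINT u:A|lborel. (Fd A t)^2 + (1 - 2 * Fd A t) * ?\<phi> u t)"
      using A by (intro set_lebesgue_integral_cong) (auto simp: power2_eq_square algebra_simps)
    also have "\<dots> = (LINT u:A|lborel. (Fd A t)^2) + (LINT u:A|lborel. (1 - 2 * Fd A t) * ?\<phi> u t)"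
      by (rule set_integral_add(2); rule bint[OF A, where C="\<bar>(Fd A t)^2\<bar> + \<bar>1 - 2 * Fd A t\<bar>"]) auto
    also have "\<dots> = ?\<mu> * (Fd A t)^2 + (1 - 2 * Fd A t) * G A t"
      by (simp add: set_int_const[OF A] int_G[OF A])
    also have "\<dots> = ?\<mu> * (Fd A t * (1 - Fd A t))"
      using pos by (simp add: Fd_def field_simps power2_eq_square)
    finally show "(LINT u:A|lborel. (Fd A t - ?\<phi> u t)^2) = ?\<mu> * (Fd A t * (1 - Fd A t))" .
  qed
  have "(LINT u:A|lebesgue. (LINT t:{0..1}|lebesgue. (sawpath u t - condmean A t)^2))
      = (LINT u:A|lebesgue. (LINT t:{0..1}|lborel. (Fd A t - ?\<phi> u t)^2))"
    by (simp add: inner)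
  also have "\<dots> = (LINT u:A|lborel. (LINT t:{0..1}|lborel. (Fd A t - ?\<phi> u t)^2))"
    by (rule leb_lborel[OF W_meas[OF A] A(1)])
  also have "\<dots> = (LINT t:{0..1}|lborel. (LINT u:A|lborel. (Fd A t - ?\<phi> u t)^2))"
  proof (rule swap[OF I01 A, where C=1, symmetric])
    show "(\<lambda>p. (Fd A (snd p) - ?\<phi> (fst p) (snd p))^2) \<in> borel_measurable (lborel \<Otimes>\<^sub>M lborel)"
      by measurable
    show "\<bar>(Fd A t - ?\<phi> u t)^2\<bar> \<le> 1" for u t
    proof (cases "u \<le> t")
      case True
      have "(1 - Fd A t)^2 \<le> 1" using Fb[of t] by (intro power_le_one) auto
      then show ?thesis using True by (simp add: power2_commute)
    next
      case False
      have "(Fd A t)^2 \<le> 1" using Fb[of t] by (intro power_le_one) auto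
      then show ?thesis using False by simp
    qed
  qed
  also have "\<dots> = (LINT t:{0..1}|lborel. ?\<mu> * (Fd A t * (1 - Fd A t)))"
    using eqt by simp
  also have "\<dots> = ?\<mu> * V A" unfolding V_def by simp
  finally show ?thesis .
qed

lemma cond_mse_eq:
  assumes A: "A \<in> sets borel" "A \<subseteq> {0..1}" and pos: "measure lborel A > 0"
  shows "cond_mse A = V A"
  unfolding cond_mse_def main_int[OF assms] using A pos by simp

lemma interval_borel:
  fixes A :: "real set"
  assumes iv: "is_interval A" and ne: "A \<noteq> {}" and sub: "A \<subseteq> {0..1}"
  shows "A \<in> sets borel"
proof -
  have bb: "bdd_below A" "bdd_above A" using sub by (auto intro!: bdd_belowI[of _ 0] bdd_aboveI[of _ 1])
  let ?a = "Inf A" and ?b = "Sup A"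
  have "{?a<..<?b} \<subseteq> A"
  proof
    fix x assume x: "x \<in> {?a<..<?b}"
    then obtain y where y: "y \<in> A" "y < x" using cInf_less_iff[OF ne bb(1)] by auto
    obtain z where z: "z \<in> A" "x < z" using x less_cSup_iff[OF ne bb(2)] by auto
    show "x \<in> A" using iv y z unfolding is_interval_1 by (meson less_imp_le)
  qed
  moreover have "A \<subseteq> {?a..?b}" using bb by (auto intro: cInf_lower cSup_upper)
  ultimately have "A = {?a<..<?b} \<union> (A \<inter> {?a, ?b})" by auto
  moreover have "A \<inter> {?a, ?b} \<in> sets borel"
    by (rule countable_imp_null_set_lborel[THEN null_setsD2, simplified]) auto
  ultimately show ?thesis by (metis sets.Un borel_open open_greaterThanLessThan)
qed

lemma inner_eq:
  assumes A: "A \<in> sets borel" "A \<subseteq> {0..1}" and pos: "measure lborel A > 0"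
  shows "(LINT t:{0..1}|lebesgue. (sawpath u t - condmean A t)^2)
      = (LINT t:{0..1}|lborel. (Fd A t - (if u \<le> t then 1 else 0))^2)"
proof -
  have [measurable]: "Fd A \<in> borel_measurable borel" using Fd_meas[OF A] .
  have "(LINT t:{0..1}|lebesgue. (sawpath u t - condmean A t)^2)
     = (LINT t:{0..1}|lebesgue. (Fd A t - (if u \<le> t then 1 else 0))^2)"
    by (simp add: condmean_eq[OF A pos] saw_ind)
  also have "\<dots> = (LINT t:{0..1}|lborel. (Fd A t - (if u \<le> t then 1 else 0))^2)"
    by (rule leb_lborel) auto
  finally show ?thesis .
qed

lemma sbm: "X \<in> sets M \<Longrightarrow> f \<in> borel_measurable M \<Longrightarrow> set_borel_measurable M X (f::_\<Rightarrow>real)"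
  unfolding set_borel_measurable_def by (intro borel_measurable_scaleR borel_measurable_indicator) auto

lemma saw_meas: "(\<lambda>x. sawpath x t) \<in> borel_measurable lebesgue"
proof -
  have "(\<lambda>x. sawpath x t) \<in> borel_measurable lborel" unfolding sawpath_def by measurable
  then show ?thesis by (rule measurable_completion)
qed

lemma part1:
  assumes A: "A \<in> sets lebesgue" "A \<subseteq> {0..1}" and pos: "measure lebesgue A > 0"
  shows "cond_mse A \<ge> measure lebesgue A / 6 \<and> (is_interval A \<longrightarrow> cond_mse A = measure lebesgue A / 6)"
proof
  obtain S N N' where SN: "A = S \<union> N" "N \<subseteq> N'" "N' \<in> null_sets lborel" "S \<in> sets lborel"
    using sets_completionE[OF A(1)] by metis
  have Sb: "S \<in> sets borel" "S \<subseteq> {0..1}" using SN A by auto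
  have N'l: "N' \<in> null_sets lebesgue" using SN(3) by (simp add: null_sets_completion_iff2) blast
  have ae: "AE x in lebesgue. x \<in> S \<longleftrightarrow> x \<in> A"
    by (rule AE_I'[OF N'l]) (use SN in auto)
  have mS: "measure lebesgue A = measure lborel S"
    using measure_eq_AE[OF ae] Sb A by simp
  have posS: "measure lborel S > 0" using pos mS by simp
  have cm: "condmean A = condmean S"
  proof
    fix t
    have "(LINT u:S|lebesgue. sawpath u t) = (LINT u:A|lebesgue. sawpath u t)"
      by (rule set_integral_cong_set) (use ae A Sb saw_meas in \<open>auto intro!: sbm\<close>)
    then show "condmean A t = condmean S t" unfolding condmean_def using mS Sb by simp
  qed
  have Wm: "(\<lambda>u. LINT t:{0..1}|lebesgue. (sawpath u t - condmean S t)^2) \<in> borel_measurable lebesgue"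
  proof -
    have "(\<lambda>u. LINT t:{0..1}|lborel. (Fd S t - (if u \<le> t then 1 else 0))^2) \<in> borel_measurable lebesgue"
      using W_meas[OF Sb] by (intro measurable_completion) simp
    then show ?thesis by (simp add: inner_eq[OF Sb posS])
  qed
  have "cond_mse A = cond_mse S"
  proof -
    have "(LINT u:S|lebesgue. (LINT t:{0..1}|lebesgue. (sawpath u t - condmean S t)^2))
        = (LINT u:A|lebesgue. (LINT t:{0..1}|lebesgue. (sawpath u t - condmean S t)^2))"
      by (rule set_integral_cong_set) (use ae A Sb Wm in \<open>auto intro!: sbm\<close>)
    then show ?thesis unfolding cond_mse_def cm using mS Sb by simp
  qed
  then show "cond_mse A \<ge> measure lebesgue A / 6"
    using cond_mse_eq[OF Sb posS] V_ineq(1)[OF Sb posS] mS by simp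
  show "is_interval A \<longrightarrow> cond_mse A = measure lebesgue A / 6"
  proof
    assume iv: "is_interval A"
    have "A \<noteq> {}" using pos by auto
    then have Ab: "A \<in> sets borel" using interval_borel iv A(2) by blast
    have posA: "measure lborel A > 0" using pos Ab by simp
    show "cond_mse A = measure lebesgue A / 6"
      using cond_mse_eq[OF Ab A(2) posA] V_ineq(2)[OF Ab A(2) posA iv] Ab by simp
  qed
qed

lemma condmean_zero:
  assumes A: "A \<in> sets borel" and z: "measure lborel A = 0"
  shows "condmean A t = 0"
  unfolding condmean_def using A z by simp

lemma condmean_meas[measurable]:
  assumes A: "A \<in> sets borel" "A \<subseteq> {0..1}"
  shows "condmean A \<in> borel_measurable borel"
proof (cases "measure lborel A > 0")
  case True
  have [measurable]: "Fd A \<in> borel_measurable borel" using Fd_meas[OF A] .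
  have "condmean A = (\<lambda>t. t - Fd A t)" using condmean_eq[OF A True] by auto
  then show ?thesis by simp
next
  case False
  then have "condmean A = (\<lambda>t. 0)" using condmean_zero[OF A(1)] measure_nonneg[of lborel A] by force
  then show ?thesis by simp
qed

lemma diff_bnd:
  assumes A: "A \<in> sets borel" "A \<subseteq> {0..1}" and t: "t \<in> {0..1}"
  shows "\<bar>sawpath u t - condmean A t\<bar> \<le> 1"
proof (cases "measure lborel A > 0")
  case True
  then show ?thesis using Fd_bnd[OF A, of t] by (auto simp: condmean_eq[OF A True] saw_ind abs_le_iff)
next
  case False
  then have "condmean A t = 0" using condmean_zero[OF A(1)] measure_nonneg[of lborel A] by force
  then show ?thesis using t by (auto simp: saw_ind abs_le_iff)
qed

definition hh :: "real set \<Rightarrow> real \<Rightarrow> real" where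
  "hh A u = (LINT t:{0..1}|lebesgue. (sawpath u t - condmean A t)^2)"

lemma hh_lborel:
  assumes A: "A \<in> sets borel" "A \<subseteq> {0..1}"
  shows "hh A u = (LINT t:{0..1}|lborel. (sawpath u t - condmean A t)^2)"
  unfolding hh_def
  by (rule leb_lborel) (use condmean_meas[OF A] in \<open>auto simp: saw_ind\<close>)

lemma hh_meas[measurable]:
  assumes A: "A \<in> sets borel" "A \<subseteq> {0..1}"
  shows "hh A \<in> borel_measurable borel"
proof -
  have [measurable]: "condmean A \<in> borel_measurable borel" using condmean_meas[OF A] .
  have "(\<lambda>u. LINT t:{0..1}|lborel. (sawpath u t - condmean A t)^2) \<in> borel_measurable lborel"
    unfolding set_lebesgue_integral_def saw_ind by measurable
  moreover have "hh A = (\<lambda>u. LINT t:{0..1}|lborel. (sawpath u t - condmean A t)^2)"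
    using hh_lborel[OF A] by (intro ext)
  ultimately show ?thesis by simp
qed

lemma hh_bnd:
  assumes A: "A \<in> sets borel" "A \<subseteq> {0..1}"
  shows "0 \<le> hh A u" "hh A u \<le> 1"
proof -
  have [measurable]: "condmean A \<in> borel_measurable borel" using condmean_meas[OF A] .
  have I01: "{0..1::real} \<in> sets borel" "{0..1::real} \<subseteq> {0..1}" by auto
  have q: "0 \<le> (sawpath u t - condmean A t)^2 \<and> (sawpath u t - condmean A t)^2 \<le> 1" if "t \<in> {0..1}" for t
    using diff_bnd[OF A that, of u] by (simp add: abs_le_iff power_le_one abs_square_le_1)
  have iq: "set_integrable lborel {0..1} (\<lambda>t. (sawpath u t - condmean A t)^2)"
    by (rule bint[OF I01, where C=1]) (use q in \<open>auto simp: saw_ind\<close>)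
  show "0 \<le> hh A u" unfolding hh_lborel[OF A] set_lebesgue_integral_def using q
    by (intro Bochner_Integration.integral_nonneg) (auto simp: indicator_def)
  have i1: "set_integrable lborel {0..1::real} (\<lambda>_. 1::real)" using bint[OF I01, of "\<lambda>_. 1" 1] by simp
  have "hh A u \<le> (LINT t:{0..1::real}|lborel. (1::real))" unfolding hh_lborel[OF A]
    by (rule set_integral_mono[OF iq i1]) (use q in auto)
  then show "hh A u \<le> 1" using set_int_const[OF I01, of 1] by simp
qed

lemma bint_leb:
  fixes h :: "real \<Rightarrow> real"
  assumes S: "S \<in> sets borel" "S \<subseteq> {0..1}" and h: "h \<in> borel_measurable borel"
    and b: "\<And>x. x \<in> S \<Longrightarrow> \<bar>h x\<bar> \<le> C"
  shows "set_integrable lebesgue S h"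
proof -
  have "set_integrable lborel S h" by (rule bint[OF S h b])
  moreover have "(\<lambda>x. indicat_real S x *\<^sub>R h x) \<in> borel_measurable lborel" using S h by measurable
  ultimately show ?thesis unfolding set_integrable_def using integrable_completion by blast
qed

lemma part2:
  fixes f :: "(real \<Rightarrow> real) \<Rightarrow> nat"
  assumes gm: "(\<lambda>u. f (sawpath u)) \<in> measurable (restrict_space borel {0..1}) (count_space UNIV)"
  shows "distortion f \<ge> (\<Sum>i. (measure lebesgue (cell f i))\<^sup>2 / 6) \<and>
            ((\<forall>i. cell f i \<noteq> {} \<longrightarrow> is_interval (cell f i)) \<longrightarrow>
               distortion f = (\<Sum>i. (measure lebesgue (cell f i))\<^sup>2 / 6))"
proof -
  define g where "g u = f (sawpath u)" for u
  define C where "C i = cell f i" for i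
  have Cg: "C i = {u \<in> {0..1}. g u = i}" for i unfolding C_def cell_def g_def ..
  have Cb: "C i \<in> sets borel" "C i \<subseteq> {0..1}" for i
  proof -
    have "g -` {i} \<inter> space (restrict_space borel {0..1::real}) \<in> sets (restrict_space borel {0..1})"
      by (rule measurable_sets[OF gm[folded g_def]]) auto
    moreover have "g -` {i} \<inter> space (restrict_space borel {0..1::real}) = C i"
      by (auto simp: Cg)
    ultimately have "C i \<in> sets (restrict_space borel {0..1})" by simp
    then show "C i \<in> sets borel" "C i \<subseteq> {0..1}" by (auto simp: sets_restrict_space_iff)
  qed
  define g' where "g' u = (if u \<in> {0..1} then g u else 0)" for u :: real
  have g'm: "g' \<in> borel \<rightarrow>\<^sub>M count_space UNIV"
    using gm[folded g_def] measurable_restrict_space_iff[where \<Omega>="{0..1::real}" and M=borel and N="count_space UNIV" and c=0 and f=g]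
    unfolding g'_def by simp
  define Hf where "Hf u = hh (C (g' u)) u" for u
  have Hm: "Hf \<in> borel_measurable borel"
    unfolding Hf_def by (rule measurable_compose_countable[OF _ g'm]) (use hh_meas[OF Cb] in auto)
  have Hb: "\<bar>Hf u\<bar> \<le> 1" for u using hh_bnd[OF Cb, of "g' u" u] by (simp add: Hf_def)
  have U: "(\<Union>i. C i) = {0..1}" by (auto simp: Cg)
  have disj: "C i \<inter> C j = {}" if "i \<noteq> j" for i j using that by (auto simp: Cg)
  have dist: "distortion f = (LINT u:{0..1}|lebesgue. Hf u)"
    unfolding distortion_def
    by (intro set_lebesgue_integral_cong) (auto simp: Hf_def hh_def g'_def C_def g_def)
  have intH: "set_integrable lebesgue (\<Union>i. C i) Hf"
    unfolding U by (rule bint_leb[OF _ _ Hm Hb]) auto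
  define T where "T i = (LINT u:C i|lebesgue. hh (C i) u)" for i
  have sumT: "distortion f = (\<Sum>i. T i)"
  proof -
    have "distortion f = (\<Sum>i. (LINT u:C i|lebesgue. Hf u))"
      unfolding dist U[symmetric] by (rule lebesgue_integral_countable_add[OF _ disj intH]) (use Cb in auto)
    also have "\<dots> = (\<Sum>i. T i)" unfolding T_def
      by (intro suminf_cong set_lebesgue_integral_cong) (use Cb in \<open>auto simp: Hf_def g'_def Cg\<close>)
    finally show ?thesis .
  qed
  have Tb: "0 \<le> T i \<and> T i \<le> measure lebesgue (C i)" for i
  proof -
    have T2: "T i = (LINT u:C i|lborel. hh (C i) u)" unfolding T_def
      by (rule leb_lborel[OF hh_meas[OF Cb] Cb(1)])
    have ih: "set_integrable lborel (C i) (hh (C i))"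
      by (rule bint[OF Cb hh_meas[OF Cb], where C=1]) (use hh_bnd[OF Cb] in \<open>auto simp: abs_le_iff\<close>)
    have i1: "set_integrable lborel (C i) (\<lambda>_. 1::real)" using bint[OF Cb(1)[of i] Cb(2)[of i], of "\<lambda>_. 1" 1] by simp
    have "T i \<le> (LINT u:C i|lborel. (1::real))" unfolding T2
      by (rule set_integral_mono[OF ih i1]) (use hh_bnd[OF Cb] in auto)
    moreover have "0 \<le> T i" unfolding T2 set_lebesgue_integral_def using hh_bnd[OF Cb]
      by (intro Bochner_Integration.integral_nonneg) (auto simp: indicator_def)
    ultimately show ?thesis using set_int_const[OF Cb(1)[of i] Cb(2)[of i], of 1] Cb by simp
  qed
  have Tge: "(measure lebesgue (C i))^2 / 6 \<le> T i" 
    and Teq: "(C i \<noteq> {} \<longrightarrow> is_interval (C i)) \<Longrightarrow> T i = (measure lebesgue (C i))^2 / 6" for i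
  proof -
    let ?m = "measure lebesgue (C i)"
    have Cl: "C i \<in> sets lebesgue" using Cb by simp
    have "?m^2 / 6 \<le> T i \<and> ((C i \<noteq> {} \<longrightarrow> is_interval (C i)) \<longrightarrow> T i = ?m^2 / 6)"
    proof (cases "?m > 0")
      case True
      have cm: "cond_mse (C i) = T i / ?m" unfolding cond_mse_def T_def hh_def ..
      have "C i \<noteq> {}" using True by auto
      then show ?thesis using part1[OF Cl Cb(2) True] True unfolding cm
        by (auto simp: field_simps power2_eq_square)
    next
      case False
      then have "?m = 0" using measure_nonneg[of lebesgue "C i"] by linarith
      then show ?thesis using Tb[of i] by simp
    qed
    then show "?m^2 / 6 \<le> T i" "(C i \<noteq> {} \<longrightarrow> is_interval (C i)) \<Longrightarrow> T i = ?m^2 / 6" by auto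
  qed
  have sm: "summable (\<lambda>i. measure lebesgue (C i))"
  proof -
    have "(\<lambda>i. measure lebesgue (C i)) sums (measure lebesgue (\<Union>i. C i))"
    proof (rule measure_UNION)
      show "range C \<subseteq> sets lebesgue" using Cb by auto
      show "disjoint_family C" using disj by (auto simp: disjoint_family_on_def)
      show "emeasure lebesgue (\<Union>i. C i) \<noteq> \<infinity>" unfolding U by simp
    qed
    then show ?thesis by (rule sums_summable)
  qed
  have s2: "summable (\<lambda>i. (measure lebesgue (C i))^2 / 6)"
  proof (rule summable_comparison_test[OF _ sm])
    show "\<exists>N. \<forall>n\<ge>N. norm ((measure lebesgue (C n))^2 / 6) \<le> measure lebesgue (C n)"
    proof (intro exI allI impI)
      fix n
      have "measure lebesgue (C n) \<le> 1" using mu_le1[OF Cb] Cb by simp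
      then have "(measure lebesgue (C n))^2 \<le> measure lebesgue (C n)"
        by (simp add: power2_eq_square mult_left_le)
      moreover have "0 \<le> (measure lebesgue (C n))^2" by simp
      ultimately have "(measure lebesgue (C n))^2 / 6 \<le> measure lebesgue (C n)" by linarith
      then show "norm ((measure lebesgue (C n))^2 / 6) \<le> measure lebesgue (C n)" by simp
    qed
  qed
  have sT: "summable T"
    by (rule summable_comparison_test[OF _ sm]) (use Tb in auto)
  have "(\<Sum>i. (measure lebesgue (C i))^2 / 6) \<le> (\<Sum>i. T i)"
    by (rule suminf_le[OF Tge s2 sT])
  moreover have "(\<forall>i. C i \<noteq> {} \<longrightarrow> is_interval (C i)) \<longrightarrow> (\<Sum>i. T i) = (\<Sum>i. (measure lebesgue (C i))^2 / 6)"
  proof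
    assume "\<forall>i. C i \<noteq> {} \<longrightarrow> is_interval (C i)"
    then have "T = (\<lambda>i. (measure lebesgue (C i))^2 / 6)" using Teq by auto
    then show "(\<Sum>i. T i) = (\<Sum>i. (measure lebesgue (C i))^2 / 6)" by simp
  qed
  ultimately show ?thesis unfolding sumT C_def by simp
qed


theorem mainTheorem4:
  shows "(\<forall>A. A \<in> sets lebesgue \<longrightarrow> A \<subseteq> {0..1} \<longrightarrow> measure lebesgue A > 0 \<longrightarrow>
            cond_mse A \<ge> measure lebesgue A / 6 \<and>
            (is_interval A \<longrightarrow> cond_mse A = measure lebesgue A / 6))
       \<and> (\<forall>f :: (real \<Rightarrow> real) \<Rightarrow> nat.
            (\<lambda>u. f (sawpath u)) \<in> measurable (restrict_space borel {0..1}) (count_space UNIV) \<longrightarrow>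
            distortion f \<ge> (\<Sum>i. (measure lebesgue (cell f i))\<^sup>2 / 6) \<and>
            ((\<forall>i. cell f i \<noteq> {} \<longrightarrow> is_interval (cell f i)) \<longrightarrow>
               distortion f = (\<Sum>i. (measure lebesgue (cell f i))\<^sup>2 / 6)))"
  using part1 part2 by blast

end
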